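(* Let $\mathcal{K}^{\langle\infty\rangle}$ be a planar unbounded simple nested fractal whose number of essential fixed points is $k=3$. Then $\mathcal{K}^{\langle\infty\rangle}$ has the good labelling property.
   Context: Setting: $L>1$, $N\ge2$, $\nu_1=0,\dots,\nu_N\in\mathbb{R}^2$, $\Psi_i(x)=x/L+\nu_i$, and $\mathcal{K}^{\langle 0\rangle}=\bigcup_i\Psi_i(\mathcal{K}^{\langle 0\rangle})$ is a planar simple nested fractal (essential fixed points $V_0^{\langle0\rangle}$: fixed points $x$ for which there are another fixed point $y$ and $\Psi_i\ne\Psi_j$ with $\Psi_i(x)=\Psi_j(y)$; open set condition, nesting, symmetry with respect to perpendicular bisectors of pairs of essential fixed points, connectivity); $k=\#V_0^{\langle0\rangle}$, and $V_0^{\langle0\rangle}$ spans a regular $k$-gon. $\mathcal{K}^{\langle M\rangle}=L^M\mathcal{K}^{\langle 0\rangle}$, $\mathcal{K}^{\langle\infty\rangle}=\bigcup_{M\ge0}\mathcal{K}^{\langle M\rangle}$. An $M$-complex is $\Delta_M=\mathcal{K}^{\langle M\rangle}+\nu_{\Delta_M}$ with $\nu_{\Delta_M}=\sum_{j=M+1}^{J}L^j\nu_{i_j}$ ($J\ge M+1$), vertex set $V(\Delta_M)=L^MV_0^{\langle0\rangle}+\nu_{\Delta_M}$; $V_M^{\langle M\rangle}=L^MV_0^{\langle0\rangle}$ and $V_M^{\langle\infty\rangle}$ is the union of all $V(\Delta_M)$. With $\mathcal{A}$ an alphabet of $k$ symbols and $\mathcal{R}_M$ the $k$ rotations about the barycenter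 of $\mathcal{K}^{\langle M\rangle}$ preserving $V_M^{\langle M\rangle}$, a good labelling function of order $M$ is $\ell_M:V_M^{\langle\infty\rangle}\to\mathcal{A}$, bijective on $V_M^{\langle M\rangle}$, such that for each $M$-complex $\Delta_M=\mathcal{K}^{\langle M\rangle}+\nu_{\Delta_M}$ there is $R_{\Delta_M}\in\mathcal{R}_M$ with $\ell_M(v)=\ell_M(R_{\Delta_M}(v-\nu_{\Delta_M}))$, $v\in V(\Delta_M)$. The good labelling property means that a good labelling function of some order $M\in\mathbb{Z}$ exists. *)

theory Defs
  imports "HOL-Analysis.Analysis"
begin

definition Psi :: "real \<Rightarrow> (nat \<Rightarrow> complex) \<Rightarrow> nat \<Rightarrow> complex \<Rightarrow> complex" where
  "Psi L \<nu> i x = x / complex_of_real L + \<nu> i"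

fun Psiw :: "real \<Rightarrow> (nat \<Rightarrow> complex) \<Rightarrow> nat list \<Rightarrow> complex \<Rightarrow> complex" where
  "Psiw L \<nu> [] = id"
| "Psiw L \<nu> (i # w) = Psi L \<nu> i \<circ> Psiw L \<nu> w"

definition words :: "nat \<Rightarrow> nat \<Rightarrow> nat list set" where
  "words N m = {w. length w = m \<and> set w \<subseteq> {1..N}}"

definition fixed_points :: "real \<Rightarrow> (nat \<Rightarrow> complex) \<Rightarrow> nat \<Rightarrow> complex set" where
  "fixed_points L \<nu> N = {x. \<exists>i\<in>{1..N}. Psi L \<nu> i x = x}"

definition essential_fixed_points :: "real \<Rightarrow> (nat \<Rightarrow> complex) \<Rightarrow> nat \<Rightarrow> complex set" where
  "essential_fixed_points L \<nu> N =
     {x \<in> fixed_points L \<nu> N. \<exists>y \<in> fixed_points L \<nu> N. \<exists>i\<in>{1..N}. \<exists>j\<in>{1..N}.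
        Psi L \<nu> i \<noteq> Psi L \<nu> j \<and> Psi L \<nu> i x = Psi L \<nu> j y}"

definition level_vertices :: "real \<Rightarrow> (nat \<Rightarrow> complex) \<Rightarrow> nat \<Rightarrow> nat \<Rightarrow> complex set" where
  "level_vertices L \<nu> N n =
     (\<Union>w\<in>words N n. Psiw L \<nu> w ` essential_fixed_points L \<nu> N)"

definition bisector_reflection :: "complex \<Rightarrow> complex \<Rightarrow> complex \<Rightarrow> complex" where
  "bisector_reflection x y z =
     z - (2 * ((z - (x + y) / 2) \<bullet> (y - x)) / ((y - x) \<bullet> (y - x))) *\<^sub>R (y - x)"

definition regular_polygon :: "complex set \<Rightarrow> nat \<Rightarrow> bool" where
  "regular_polygon V k \<longleftrightarrow>
     (\<exists>c r u. r > 0 \<and> norm u = 1 \<and>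
        V = {c + complex_of_real r * u * cis (2 * pi * real j / real k) | j. j < k})"

text \<open>Planar simple nested fractal (Lindstrom's axioms), including the standing
  assumption that V_0 spans a regular polygon.\<close>
definition planar_simple_nested_fractal ::
  "real \<Rightarrow> nat \<Rightarrow> (nat \<Rightarrow> complex) \<Rightarrow> complex set \<Rightarrow> bool" where
  "planar_simple_nested_fractal L N \<nu> K0 \<longleftrightarrow>
     L > 1 \<and> N \<ge> 2 \<and> \<nu> 1 = 0 \<and>
     \<comment> \<open>K0 is the (unique nonempty compact) attractor\<close>
     compact K0 \<and> K0 \<noteq> {} \<and> K0 = (\<Union>i\<in>{1..N}. Psi L \<nu> i ` K0) \<and>
     \<comment> \<open>at least two essential fixed points\<close>
     card (essential_fixed_points L \<nu> N) \<ge> 2 \<and>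
     \<comment> \<open>open set condition\<close>
     (\<exists>U. open U \<and> U \<noteq> {} \<and> (\<forall>i\<in>{1..N}. Psi L \<nu> i ` U \<subseteq> U) \<and>
        (\<forall>i\<in>{1..N}. \<forall>j\<in>{1..N}. i \<noteq> j \<longrightarrow> Psi L \<nu> i ` U \<inter> Psi L \<nu> j ` U = {})) \<and>
     \<comment> \<open>nesting\<close>
     (\<forall>n. \<forall>w\<in>words N n. \<forall>w'\<in>words N n. w \<noteq> w' \<longrightarrow>
        Psiw L \<nu> w ` K0 \<inter> Psiw L \<nu> w' ` K0 =
        Psiw L \<nu> w ` essential_fixed_points L \<nu> N \<inter> Psiw L \<nu> w' ` essential_fixed_points L \<nu> N) \<and>
     \<comment> \<open>symmetry\<close>
     (\<forall>x\<in>essential_fixed_points L \<nu> N. \<forall>y\<in>essential_fixed_points L \<nu> N. x \<noteq> y \<longrightarrow>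
        (\<forall>n. bisector_reflection x y ` level_vertices L \<nu> N n \<subseteq> level_vertices L \<nu> N n)) \<and>
     \<comment> \<open>connectivity of the graph of 1-cells\<close>
     (\<forall>i\<in>{1..N}. \<forall>j\<in>{1..N}.
        (\<lambda>a b. a \<in> {1..N} \<and> b \<in> {1..N} \<and>
           Psi L \<nu> a ` essential_fixed_points L \<nu> N \<inter> Psi L \<nu> b ` essential_fixed_points L \<nu> N \<noteq> {})\<^sup>*\<^sup>* i j) \<and>
     \<comment> \<open>V_0 spans a regular k-gon\<close>
     regular_polygon (essential_fixed_points L \<nu> N) (card (essential_fixed_points L \<nu> N))"

definition complex_shifts :: "real \<Rightarrow> nat \<Rightarrow> (nat \<Rightarrow> complex) \<Rightarrow> int \<Rightarrow> complex set" where
  "complex_shifts L N \<nu> M =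
     {t. \<exists>J::int. \<exists>idx::int \<Rightarrow> nat. J \<ge> M + 1 \<and> (\<forall>j\<in>{M+1..J}. idx j \<in> {1..N}) \<and>
         t = (\<Sum>j\<in>{M+1..J}. complex_of_real (L powi j) * \<nu> (idx j))}"

definition VMM :: "real \<Rightarrow> nat \<Rightarrow> (nat \<Rightarrow> complex) \<Rightarrow> int \<Rightarrow> complex set" where
  "VMM L N \<nu> M = (\<lambda>x. complex_of_real (L powi M) * x) ` essential_fixed_points L \<nu> N"

definition complex_vertices :: "real \<Rightarrow> nat \<Rightarrow> (nat \<Rightarrow> complex) \<Rightarrow> int \<Rightarrow> complex \<Rightarrow> complex set" where
  "complex_vertices L N \<nu> M t = (\<lambda>x. x + t) ` VMM L N \<nu> M"

definition VMinf :: "real \<Rightarrow> nat \<Rightarrow> (nat \<Rightarrow> complex) \<Rightarrow> int \<Rightarrow> complex set" where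
  "VMinf L N \<nu> M = (\<Union>t\<in>complex_shifts L N \<nu> M. complex_vertices L N \<nu> M t)"

text \<open>Barycenter of K^{<M>}, taken as the centroid of its vertex set V_M^{<M>}
  (which coincides with the barycenter of K^{<M>} by symmetry).\<close>
definition barycenter :: "real \<Rightarrow> nat \<Rightarrow> (nat \<Rightarrow> complex) \<Rightarrow> int \<Rightarrow> complex" where
  "barycenter L N \<nu> M = (\<Sum>v\<in>VMM L N \<nu> M. v) / of_nat (card (VMM L N \<nu> M))"

definition rotations_M :: "real \<Rightarrow> nat \<Rightarrow> (nat \<Rightarrow> complex) \<Rightarrow> int \<Rightarrow> (complex \<Rightarrow> complex) set" where
  "rotations_M L N \<nu> M =
     {R. \<exists>u. norm u = 1 \<and>
          R = (\<lambda>x. barycenter L N \<nu> M + u * (x - barycenter L N \<nu> M)) \<and>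
          R ` VMM L N \<nu> M = VMM L N \<nu> M}"

definition good_labelling_function ::
  "real \<Rightarrow> nat \<Rightarrow> (nat \<Rightarrow> complex) \<Rightarrow> int \<Rightarrow> 'a set \<Rightarrow> (complex \<Rightarrow> 'a) \<Rightarrow> bool" where
  "good_labelling_function L N \<nu> M A lab \<longleftrightarrow>
     lab ` VMinf L N \<nu> M \<subseteq> A \<and>
     bij_betw lab (VMM L N \<nu> M) A \<and>
     (\<forall>t\<in>complex_shifts L N \<nu> M. \<exists>R\<in>rotations_M L N \<nu> M.
        \<forall>v\<in>complex_vertices L N \<nu> M t. lab v = lab (R (v - t)))"

definition good_labelling_property :: "real \<Rightarrow> nat \<Rightarrow> (nat \<Rightarrow> complex) \<Rightarrow> bool" where
  "good_labelling_property L N \<nu> \<longleftrightarrow>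
     (\<exists>M::int. \<exists>A::nat set. \<exists>lab.
        card A = card (essential_fixed_points L \<nu> N) \<and>
        good_labelling_function L N \<nu> M A lab)"

end

theory Submission
  imports Defs
begin

definition om :: complex where "om = Complex (-1/2) (sqrt 3/2)"
definition om2 :: complex where "om2 = Complex (-1/2) (-(sqrt 3/2))"

lemma cis1: "cis (2 * pi * real 1 / real 3) = om"
  using cos_120 sin_120 by (simp add: om_def complex_eq_iff)

lemma cis2: "cis (2 * pi * real 2 / real 3) = om2"
proof -
  have e: "2 * pi * real 2 / real 3 = pi/3 + pi" by simp
  have c: "cos (2 * pi * real 2 / real 3) = -1/2"
    unfolding e cos_periodic_pi cos_60 by simp
  have s: "sin (2 * pi * real 2 / real 3) = -(sqrt 3/2)"
    unfolding e sin_periodic_pi sin_60 by simp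
  show ?thesis using c s by (simp add: om2_def complex_eq_iff)
qed

lemma set3: "{f j | j. j < (3::nat)} = {f 0, f 1, f 2}"
proof -
  have e: "j < 3 \<longleftrightarrow> j = 0 \<or> j = 1 \<or> j = (2::nat)" for j by arith
  show ?thesis unfolding e by auto
qed

lemma s3: "sqrt 3 * sqrt 3 = (3::real)" by simp

lemma s3a: "sqrt 3 * (sqrt 3 * x) = (3::real) * x" by (metis mult.assoc s3)

lemma om_sq: "om * om = om2" "om * om2 = 1" "om2 * om2 = om" "om2 * om = 1"
  by (simp_all add: om_def om2_def complex_eq_iff algebra_simps s3)

lemma om_norm: "norm om = 1" "norm om2 = 1"
  by (simp_all add: om_def om2_def cmod_def power2_eq_square s3)

lemma om_sum: "1 + om + om2 = 0"
  by (simp add: om_def om2_def complex_eq_iff)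

theorem theorem3p11:
  fixes L :: real and N :: nat and \<nu> :: "nat \<Rightarrow> complex" and K0 :: "complex set"
  assumes "planar_simple_nested_fractal L N \<nu> K0"
    and "card (essential_fixed_points L \<nu> N) = 3"
  shows "good_labelling_property L N \<nu>"
proof -
  define E where "E = essential_fixed_points L \<nu> N"
  have "regular_polygon E (card E)" using assms(1) unfolding planar_simple_nested_fractal_def E_def
    by (elim conjE)
  then have "regular_polygon E 3" using assms(2) unfolding E_def by simp
  then obtain c r u where r: "r > 0" and u: "norm u = 1"
    and E0: "E = {c + complex_of_real r * u * cis (2 * pi * real j / real 3) | j. j < 3}"
    unfolding regular_polygon_def by blast
  define a where "a = complex_of_real r * u"
  have a0: "a \<noteq> 0" using r u by (auto simp: a_def)
  define w0 where "w0 = c + a"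
  define w1 where "w1 = c + a * om"
  define w2 where "w2 = c + a * om2"
  have E: "E = {w0, w1, w2}"
    unfolding E0 set3 w0_def w1_def w2_def a_def
    using cis1 cis2 by simp
  have cE: "card {w0, w1, w2} = 3" using assms(2) E E_def by simp
  then have dist: "w0 \<noteq> w1" "w0 \<noteq> w2" "w1 \<noteq> w2"
    by (auto simp: card_insert_if split: if_splits)
  have VMM: "VMM L N \<nu> 0 = E" unfolding VMM_def E_def by simp
  have bary: "barycenter L N \<nu> 0 = c"
  proof -
    have "(\<Sum>v\<in>E. v) = w0 + w1 + w2" using dist E by simp
    also have "\<dots> = 3 * c + a * (1 + om + om2)" unfolding w0_def w1_def w2_def by (simp add: algebra_simps)
    finally have "(\<Sum>v\<in>E. v) = 3 * c" using om_sum by simp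
    then show ?thesis unfolding barycenter_def VMM using assms(2) E_def by simp
  qed
  define nn where "nn z = (z - c) / a" for z
  define al where "al z = -(Re (nn z) - 1)/3 + Im (nn z)/sqrt 3" for z
  define be where "be z = -(Re (nn z) - 1)/3 - Im (nn z)/sqrt 3" for z
  define sg where "sg z = \<lfloor>al z\<rfloor> - \<lfloor>be z\<rfloor>" for z
  define lab where "lab z = nat (sg z mod 3)" for z
  have nn: "nn (c + a * q + t) = q + t / a" for q t
    using a0 unfolding nn_def by (simp add: field_simps)
  have al1: "al (w1 + t) = al (w0 + t) + 1" and be1: "be (w1 + t) = be (w0 + t)"
   and al2: "al (w2 + t) = al (w0 + t)" and be2: "be (w2 + t) = be (w0 + t) + 1" for t
  proof -
    have n0: "nn (w0 + t) = 1 + t / a" using nn[of 1 t] unfolding w0_def by simp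
    have n1: "nn (w1 + t) = om + t / a" using nn[of om t] unfolding w1_def by simp
    have n2: "nn (w2 + t) = om2 + t / a" using nn[of om2 t] unfolding w2_def by simp
    show "al (w1 + t) = al (w0 + t) + 1" "be (w1 + t) = be (w0 + t)"
      "al (w2 + t) = al (w0 + t)" "be (w2 + t) = be (w0 + t) + 1"
      unfolding al_def be_def n0 n1 n2 by (simp_all add: om_def om2_def field_simps s3a)
  qed
  have sg1: "sg (w1 + t) = sg (w0 + t) + 1" and sg2: "sg (w2 + t) = sg (w0 + t) - 1" for t
    unfolding sg_def al1 be1 al2 be2 by simp_all
  have sgw0: "sg w0 = 0"
  proof -
    have "nn w0 = 1" using a0 unfolding nn_def w0_def by simp
    then show ?thesis unfolding sg_def al_def be_def by simp
  qed
  have labw: "lab w0 = 0" "lab w1 = 1" "lab w2 = 2"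
    using sg1[of 0] sg2[of 0] sgw0 unfolding lab_def by simp_all
  define A where "A = {0, 1, 2::nat}"
  have lab: "good_labelling_function L N \<nu> 0 A lab"
    unfolding good_labelling_function_def
  proof (intro conjI ballI)
    show "lab ` VMinf L N \<nu> 0 \<subseteq> A" unfolding lab_def A_def by auto
    show "bij_betw lab (VMM L N \<nu> 0) A"
    proof -
      have im: "lab ` {w0, w1, w2} = {0, 1, 2}" using labw by simp
      have "card (lab ` {w0, w1, w2}) = card {w0, w1, w2}" unfolding im cE by simp
      then have "inj_on lab {w0, w1, w2}" by (simp only: inj_on_iff_eq_card finite.emptyI finite_insert)
      then show ?thesis unfolding VMM E A_def bij_betw_def im by simp
    qed
  next
    fix t assume "t \<in> complex_shifts L N \<nu> 0"
    define s where "s = sg (w0 + t)"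
    have CV: "complex_vertices L N \<nu> 0 t = {w0 + t, w1 + t, w2 + t}"
      unfolding complex_vertices_def VMM E by simp
    have ls: "lab (w0 + t) = nat (s mod 3)" "lab (w1 + t) = nat ((s + 1) mod 3)"
      "lab (w2 + t) = nat ((s - 1) mod 3)"
      unfolding lab_def s_def sg1 sg2 by simp_all
    define R where "R \<rho> x = c + \<rho> * (x - c)" for \<rho> x
    have Rw: "R \<rho> (c + a * q) = c + a * (\<rho> * q)" for \<rho> q unfolding R_def by simp
    have R1: "R 1 w0 = w0" "R 1 w1 = w1" "R 1 w2 = w2" unfolding R_def by simp_all
    have Rom: "R om w0 = w1" "R om w1 = w2" "R om w2 = w0"
      unfolding w0_def w1_def w2_def Rw using Rw[of om 1] by (simp_all add: om_sq)
    have Rom2: "R om2 w0 = w2" "R om2 w1 = w0" "R om2 w2 = w1"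
      unfolding w0_def w1_def w2_def Rw using Rw[of om2 1] by (simp_all add: om_sq)
    have Rrot: "R \<rho> \<in> rotations_M L N \<nu> 0" if "\<rho> \<in> {1, om, om2}" for \<rho>
    proof -
      have "R \<rho> ` {w0, w1, w2} = {w0, w1, w2}"
        using that R1 Rom Rom2 by (simp only: image_insert image_empty insert_iff empty_iff) (elim disjE; simp add: insert_commute)
      moreover have "norm \<rho> = 1" using that om_norm by auto
      moreover have "R \<rho> = (\<lambda>x. c + \<rho> * (x - c))" by (simp add: R_def fun_eq_iff)
      ultimately show ?thesis unfolding rotations_M_def bary VMM E by blast
    qed
    have "s mod 3 = 0 \<or> s mod 3 = 1 \<or> s mod 3 = 2" by presburger
    then show "\<exists>R\<in>rotations_M L N \<nu> 0. \<forall>v\<in>complex_vertices L N \<nu> 0 t. lab v = lab (R (v - t))"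
    proof (elim disjE)
      assume h: "s mod 3 = 0"
      show ?thesis
      proof (rule bexI[of _ "R 1"])
        show "R 1 \<in> rotations_M L N \<nu> 0" using Rrot by simp
        have "(s + 1) mod 3 = 1" "(s - 1) mod 3 = 2" using h by presburger+
        then show "\<forall>v\<in>complex_vertices L N \<nu> 0 t. lab v = lab (R 1 (v - t))"
          unfolding CV using ls labw h R1 by simp
      qed
    next
      assume h: "s mod 3 = 1"
      show ?thesis
      proof (rule bexI[of _ "R om"])
        show "R om \<in> rotations_M L N \<nu> 0" using Rrot by simp
        have "(s + 1) mod 3 = 2" "(s - 1) mod 3 = 0" using h by presburger+
        then show "\<forall>v\<in>complex_vertices L N \<nu> 0 t. lab v = lab (R om (v - t))"
          unfolding CV using ls labw h Rom by simp
      qed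
    next
      assume h: "s mod 3 = 2"
      show ?thesis
      proof (rule bexI[of _ "R om2"])
        show "R om2 \<in> rotations_M L N \<nu> 0" using Rrot by simp
        have "(s + 1) mod 3 = 0" "(s - 1) mod 3 = 1" using h by presburger+
        then show "\<forall>v\<in>complex_vertices L N \<nu> 0 t. lab v = lab (R om2 (v - t))"
          unfolding CV using ls labw h Rom2 by simp
      qed
    qed
  qed
  have "card A = card (essential_fixed_points L \<nu> N)" using assms(2) by (simp add: A_def)
  then show ?thesis unfolding good_labelling_property_def using lab by blast
qed

end
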